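(* Let $\Gamma$ be a Deza graph with parameters $(n,k,k-1,a)$, $k>1$, $\beta=1$. Let $x$ be an $NA$-vertex and $y$ a vertex not in $\{x,x',x_b,x_b'\}$. Then either all possible edges between $\{x,x_b\}$ and $\{y,y_b\}$ are present, or there are no such edges.
   Context: A Deza graph with parameters $(n,k,b,a)$, $a\le b$, is a $k$-regular graph on $n$ vertices in which any two distinct vertices have $a$ or $b$ common neighbours; $\beta$ is the number of vertices $u\ne v$ with exactly $b$ common neighbours with a given vertex $v$. Since $\beta=1$, for each vertex $x$ let $x_b$ denote the unique vertex having $b=k-1$ common neighbours with $x$. A vertex $x$ is an $A$-vertex if $x$ is adjacent to $x_b$, and an $NA$-vertex otherwise. For an $NA$-vertex $x$, $x'$ denotes the unique neighbour of $x$ not adjacent to $x_b$, and $x_b'=(x')_b=(x_b)'$. *)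

theory Defs
  imports Main
begin

definition common_nbrs :: "'a set \<Rightarrow> ('a \<Rightarrow> 'a \<Rightarrow> bool) \<Rightarrow> 'a \<Rightarrow> 'a \<Rightarrow> nat" where
  "common_nbrs V E x y = card {z \<in> V. E x z \<and> E y z}"

definition deza_graph ::
  "'a set \<Rightarrow> ('a \<Rightarrow> 'a \<Rightarrow> bool) \<Rightarrow> nat \<Rightarrow> nat \<Rightarrow> nat \<Rightarrow> nat \<Rightarrow> bool" where
  "deza_graph V E n k b a \<longleftrightarrow>
     finite V \<and> card V = n \<and>
     (\<forall>x y. E x y \<longrightarrow> x \<in> V \<and> y \<in> V) \<and>
     (\<forall>x y. E x y \<longrightarrow> E y x) \<and>
     (\<forall>x. \<not> E x x) \<and>
     (\<forall>x\<in>V. card {y \<in> V. E x y} = k) \<and>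
     a \<le> b \<and>
     (\<forall>x\<in>V. \<forall>y\<in>V. x \<noteq> y \<longrightarrow>
        common_nbrs V E x y = a \<or> common_nbrs V E x y = b)"

definition deza_beta :: "'a set \<Rightarrow> ('a \<Rightarrow> 'a \<Rightarrow> bool) \<Rightarrow> nat \<Rightarrow> 'a \<Rightarrow> nat" where
  "deza_beta V E b v = card {u \<in> V. u \<noteq> v \<and> common_nbrs V E v u = b}"

text \<open>x_b: the unique vertex having b common neighbours with x (meaningful when beta = 1).\<close>
definition b_partner :: "'a set \<Rightarrow> ('a \<Rightarrow> 'a \<Rightarrow> bool) \<Rightarrow> nat \<Rightarrow> 'a \<Rightarrow> 'a" where
  "b_partner V E b x = (THE u. u \<in> V \<and> u \<noteq> x \<and> common_nbrs V E x u = b)"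

definition A_vertex :: "'a set \<Rightarrow> ('a \<Rightarrow> 'a \<Rightarrow> bool) \<Rightarrow> nat \<Rightarrow> 'a \<Rightarrow> bool" where
  "A_vertex V E b x \<longleftrightarrow> E x (b_partner V E b x)"

definition NA_vertex :: "'a set \<Rightarrow> ('a \<Rightarrow> 'a \<Rightarrow> bool) \<Rightarrow> nat \<Rightarrow> 'a \<Rightarrow> bool" where
  "NA_vertex V E b x \<longleftrightarrow> x \<in> V \<and> \<not> E x (b_partner V E b x)"

definition NA_prime :: "'a set \<Rightarrow> ('a \<Rightarrow> 'a \<Rightarrow> bool) \<Rightarrow> nat \<Rightarrow> 'a \<Rightarrow> 'a" where
  "NA_prime V E b x = (THE z. z \<in> V \<and> E x z \<and> \<not> E z (b_partner V E b x))"

end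

theory Submission
  imports Defs
begin

lemma common_sym: "common_nbrs V E x y = common_nbrs V E y x"
  by (simp add: common_nbrs_def conj_commute)

lemma bp_props:
  assumes D: "deza_graph V E n k (k - 1) a"
    and B: "\<forall>v\<in>V. deza_beta V E (k - 1) v = 1" and v: "v \<in> V"
  shows "b_partner V E (k-1) v \<in> V \<and> b_partner V E (k-1) v \<noteq> v
    \<and> common_nbrs V E v (b_partner V E (k-1) v) = k-1
    \<and> (\<forall>u\<in>V. u \<noteq> v \<and> common_nbrs V E v u = k-1 \<longrightarrow> u = b_partner V E (k-1) v)"
proof -
  have "card {u \<in> V. u \<noteq> v \<and> common_nbrs V E v u = k-1} = 1"
    using B v by (simp add: deza_beta_def)
  then obtain u where u: "{u \<in> V. u \<noteq> v \<and> common_nbrs V E v u = k-1} = {u}"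
    by (erule card_1_singletonE)
  have bu: "b_partner V E (k-1) v = u"
    unfolding b_partner_def
    by (rule the_equality) (use u in blast)+
  show ?thesis using u bu by blast
qed

lemma bb:
  assumes D: "deza_graph V E n k (k - 1) a"
    and B: "\<forall>v\<in>V. deza_beta V E (k - 1) v = 1" and v: "v \<in> V"
  shows "b_partner V E (k-1) (b_partner V E (k-1) v) = v"
proof -
  let ?b = "b_partner V E (k-1)"
  have 1: "?b v \<in> V" "?b v \<noteq> v" "common_nbrs V E v (?b v) = k-1"
    using bp_props[OF D B v] by auto
  have "\<forall>u\<in>V. u \<noteq> ?b v \<and> common_nbrs V E (?b v) u = k-1 \<longrightarrow> u = ?b (?b v)"
    using bp_props[OF D B 1(1)] by blast
  then show ?thesis using 1 v common_sym by metis
qed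

lemma a_less:
  assumes D: "deza_graph V E n k (k - 1) a" and k: "k > 1"
    and B: "\<forall>v\<in>V. deza_beta V E (k - 1) v = 1" and v: "v \<in> V"
  shows "a < k - 1"
proof (rule ccontr)
  assume "\<not> a < k - 1"
  with D have ak: "a = k - 1" by (auto simp: deza_graph_def)
  have fin: "finite V" using D by (simp add: deza_graph_def)
  have "{u \<in> V. u \<noteq> v \<and> common_nbrs V E v u = k-1} = V - {v}"
    using D v ak by (auto simp: deza_graph_def)
  moreover have "card {u \<in> V. u \<noteq> v \<and> common_nbrs V E v u = k-1} = 1"
    using B v by (simp add: deza_beta_def)
  ultimately have c1: "card (V - {v}) = 1" by metis
  have "{y \<in> V. E v y} \<subseteq> V - {v}" using D by (auto simp: deza_graph_def)
  then have "card {y \<in> V. E v y} \<le> 1" using c1 fin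
    by (metis card_mono finite_Diff)
  moreover have "card {y \<in> V. E v y} = k" using D v by (simp add: deza_graph_def)
  ultimately show False using k by simp
qed

lemma cval:
  assumes D: "deza_graph V E n k (k - 1) a" and k: "k > 1"
    and B: "\<forall>v\<in>V. deza_beta V E (k - 1) v = 1" and z: "z \<in> V" and y: "y \<in> V"
  shows "common_nbrs V E z y = a + (if z = y then k - a else 0)
           + (if z = b_partner V E (k-1) y then k - 1 - a else 0)"
proof -
  let ?b = "b_partner V E (k-1)"
  have al: "a < k - 1" using a_less[OF D k B y] .
  have P: "?b y \<in> V" "?b y \<noteq> y" "common_nbrs V E y (?b y) = k-1"
    "\<forall>u\<in>V. u \<noteq> y \<and> common_nbrs V E y u = k-1 \<longrightarrow> u = ?b y"
    using bp_props[OF D B y] by auto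
  show ?thesis
  proof (cases "z = y")
    case True
    have "common_nbrs V E y y = k" using D y by (simp add: common_nbrs_def deza_graph_def)
    then show ?thesis using True P(2) al by simp
  next
    case False
    note F = False
    show ?thesis
    proof (cases "z = ?b y")
      case True
      then show ?thesis using P(3) F al common_sym[of V E z y] by simp
    next
      case False
      have "common_nbrs V E z y = a \<or> common_nbrs V E z y = k - 1"
        using D z y F by (auto simp: deza_graph_def)
      moreover have "common_nbrs V E z y \<noteq> k - 1"
        using P(4) z F False common_sym[of V E z y] by metis
      ultimately show ?thesis using F False by simp
    qed
  qed
qed

lemma comm:
  assumes D: "deza_graph V E n k (k - 1) a" and k: "k > 1"
    and B: "\<forall>v\<in>V. deza_beta V E (k - 1) v = 1" and x: "x \<in> V" and y: "y \<in> V"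
  shows "E x (b_partner V E (k-1) y) = E (b_partner V E (k-1) x) y"
proof -
  let ?b = "b_partner V E (k-1)"
  have fin: "finite V" using D by (simp add: deza_graph_def)
  have Esym: "\<And>u v. E u v = E v u" using D by (auto simp: deza_graph_def)
  have inV: "\<And>u v. E u v \<Longrightarrow> v \<in> V" using D by (auto simp: deza_graph_def)
  have deg: "\<And>u. u \<in> V \<Longrightarrow> card {z \<in> V. E u z} = k" using D by (auto simp: deza_graph_def)
  define T where "T u v = (\<Sum>z\<in>V. \<Sum>w\<in>V. if E u z \<and> E z w \<and> E w v then 1 else (0::nat))" for u v
  have Tsym: "T u v = T v u" for u v
  proof -
    have "T v u = (\<Sum>w\<in>V. \<Sum>z\<in>V. if E v z \<and> E z w \<and> E w u then 1 else (0::nat))"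
      unfolding T_def by (rule sum.swap)
    also have "\<dots> = T u v" unfolding T_def
      by (intro sum.cong refl) (metis Esym)
    finally show ?thesis by (rule HOL.sym)
  qed
  have Tval: "T u v = k * a + (if E u v then k - a else 0) + (if E u (?b v) then k - 1 - a else 0)"
    if u: "u \<in> V" and v: "v \<in> V" for u v
  proof -
    have cs: "common_nbrs V E z v = (\<Sum>w\<in>V. if E z w \<and> E v w then 1 else (0::nat))" for z
      unfolding common_nbrs_def using fin by (simp add: sum.inter_filter[symmetric])
    have "T u v = (\<Sum>z\<in>V. if E u z then common_nbrs V E z v else 0)"
      unfolding T_def cs
    proof (intro sum.cong refl)
      fix z assume "z \<in> V"
      show "(\<Sum>w\<in>V. if E u z \<and> E z w \<and> E w v then 1 else (0::nat)) =
        (if E u z then \<Sum>w\<in>V. if E z w \<and> E v w then 1 else (0::nat) else 0)"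
      proof (cases "E u z")
        case True
        have "(\<Sum>w\<in>V. if E u z \<and> E z w \<and> E w v then 1 else (0::nat)) =
          (\<Sum>w\<in>V. if E z w \<and> E v w then 1 else (0::nat))"
          by (intro sum.cong refl) (use True Esym in metis)
        then show ?thesis using True by simp
      qed simp
    qed
    also have "\<dots> = (\<Sum>z\<in>{z \<in> V. E u z}. common_nbrs V E z v)"
      using fin by (simp add: sum.inter_filter)
    also have "\<dots> = (\<Sum>z\<in>{z \<in> V. E u z}. a + (if z = v then k - a else 0)
           + (if z = ?b v then k - 1 - a else 0))"
      by (intro sum.cong refl) (use cval[OF D k B _ v] in auto)
    also have "\<dots> = k * a + (if E u v then k - a else 0) + (if E u (?b v) then k - 1 - a else 0)"
      using fin deg[OF u] inV bp_props[OF D B v] v by (simp add: sum.distrib sum.delta)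
    finally show ?thesis .
  qed
  have al: "a < k - 1" using a_less[OF D k B y] .
  have "(if E x (?b y) then k - 1 - a else 0) = (if E y (?b x) then k - 1 - a else 0)"
  proof -
    have "T x y = T y x" by (rule Tsym)
    then have "k * a + (if E x y then k - a else 0) + (if E x (?b y) then k - 1 - a else 0)
      = k * a + (if E y x then k - a else 0) + (if E y (?b x) then k - 1 - a else 0)"
      by (simp only: Tval[OF x y] Tval[OF y x])
    moreover have "E x y = E y x" by (rule Esym)
    ultimately show ?thesis by (simp split: if_splits)
  qed
  then have "E x (?b y) = E y (?b x)" using al by (auto split: if_splits)
  then show ?thesis using Esym by metis
qed

theorem lemma15:
  fixes V :: "'a set" and E :: "'a \<Rightarrow> 'a \<Rightarrow> bool" and n k a :: nat and x y :: 'a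
  assumes "deza_graph V E n k (k - 1) a"
    and "k > 1"
    and "\<forall>v\<in>V. deza_beta V E (k - 1) v = 1"
    and "NA_vertex V E (k - 1) x"
    and "y \<in> V"
    and "y \<notin> {x, NA_prime V E (k - 1) x, b_partner V E (k - 1) x,
                b_partner V E (k - 1) (NA_prime V E (k - 1) x)}"
  shows "(E x y \<and> E x (b_partner V E (k - 1) y) \<and>
          E (b_partner V E (k - 1) x) y \<and>
          E (b_partner V E (k - 1) x) (b_partner V E (k - 1) y))
       \<or> (\<not> E x y \<and> \<not> E x (b_partner V E (k - 1) y) \<and>
          \<not> E (b_partner V E (k - 1) x) y \<and>
          \<not> E (b_partner V E (k - 1) x) (b_partner V E (k - 1) y))"
proof -
  note D = assms(1) and k = assms(2) and B = assms(3) and y = assms(5)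
  let ?b = "b_partner V E (k - 1)"
  let ?xb = "?b x" and ?x' = "NA_prime V E (k - 1) x"
  have x: "x \<in> V" and nx: "\<not> E x ?xb" using assms(4) by (auto simp: NA_vertex_def)
  have fin: "finite V" using D by (simp add: deza_graph_def)
  have Esym: "\<And>u v. E u v = E v u" using D by (auto simp: deza_graph_def)
  have deg: "\<And>u. u \<in> V \<Longrightarrow> card {z \<in> V. E u z} = k" using D by (auto simp: deza_graph_def)
  have P: "?xb \<in> V" "?xb \<noteq> x" "common_nbrs V E x ?xb = k-1"
    using bp_props[OF D B x] by auto
  have xbb: "?b ?xb = x" using bb[OF D B x] .
  have S1: "card {z \<in> V. E x z \<and> \<not> E z ?xb} = 1"
  proof -
    have "{z \<in> V. E x z \<and> \<not> E z ?xb} = {z \<in> V. E x z} - {z \<in> V. E x z \<and> E ?xb z}"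
      using Esym by blast
    moreover have "card {z \<in> V. E x z \<and> E ?xb z} = k - 1" using P(3) by (simp add: common_nbrs_def)
    moreover have "card ({z \<in> V. E x z} - {z \<in> V. E x z \<and> E ?xb z}) =
      card {z \<in> V. E x z} - card {z \<in> V. E x z \<and> E ?xb z}"
      by (rule card_Diff_subset) (use fin in auto)
    ultimately show ?thesis using deg[OF x] k by simp
  qed
  then obtain p where p: "{z \<in> V. E x z \<and> \<not> E z ?xb} = {p}" by (erule card_1_singletonE)
  have xp: "?x' = p" unfolding NA_prime_def by (rule the_equality) (use p in blast)+
  have x'V: "?x' \<in> V" and ex': "E x ?x'" and nx': "\<not> E ?x' ?xb"
    and x'u: "\<And>z. z \<in> V \<Longrightarrow> E x z \<Longrightarrow> \<not> E z ?xb \<Longrightarrow> z = ?x'"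
    using p xp by blast+
  have S2: "card {z \<in> V. E ?xb z \<and> \<not> E z x} = 1"
  proof -
    have "{z \<in> V. E ?xb z \<and> \<not> E z x} = {z \<in> V. E ?xb z} - {z \<in> V. E ?xb z \<and> E x z}"
      using Esym by blast
    moreover have "card {z \<in> V. E ?xb z \<and> E x z} = k - 1"
      using P(3) common_sym[of V E x ?xb] by (simp add: common_nbrs_def)
    moreover have "card ({z \<in> V. E ?xb z} - {z \<in> V. E ?xb z \<and> E x z}) =
      card {z \<in> V. E ?xb z} - card {z \<in> V. E ?xb z \<and> E x z}"
      by (rule card_Diff_subset) (use fin in auto)
    ultimately show ?thesis using deg[OF P(1)] k by simp
  qed
  then obtain q where q: "{z \<in> V. E ?xb z \<and> \<not> E z x} = {q}" by (erule card_1_singletonE)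
  have x'bV: "?b ?x' \<in> V" using bp_props[OF D B x'V] by blast
  have "E ?xb (?b ?x')" using comm[OF D k B P(1) x'V] xbb ex' by simp
  moreover have "\<not> E (?b ?x') x"
    using comm[OF D k B x x'V] nx' Esym by metis
  ultimately have "?b ?x' = q" using q x'bV by blast
  then have x'bu: "\<And>z. z \<in> V \<Longrightarrow> E ?xb z \<Longrightarrow> \<not> E z x \<Longrightarrow> z = ?b ?x'"
    using q by blast
  have ny: "y \<noteq> ?x'" "y \<noteq> ?b ?x'" using assms(6) by auto
  have c1: "E x y = E ?xb y"
    using x'u[OF y] x'bu[OF y] ny Esym by metis
  have c2: "E x (?b y) = E ?xb y" using comm[OF D k B x y] .
  have c3: "E ?xb (?b y) = E x y" using comm[OF D k B P(1) y] xbb by simp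
  show ?thesis using c1 c2 c3 by blast
qed

end
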